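(* Let $B,U\ge 1$, $\mathbf{H}\in\mathbb{C}^{B\times U}$, $\mathbf{j}\in\mathbb{C}^B$, and let $\mathbf{y}=\mathbf{H}\mathbf{s}+\mathbf{j}w+\mathbf{n}\in\mathbb{C}^B$, where $\mathbf{s}\in\mathbb{C}^U$ has independent zero-mean entries with $\mathbb{E}[\mathbf{s}\mathbf{s}^H]=E_s\mathbf{I}_U$, $w$ is circularly-symmetric complex Gaussian with variance $E_J$, $\mathbf{n}$ is i.i.d. circularly-symmetric complex Gaussian with per-entry variance $N_0$, and $\mathbf{s},w,\mathbf{n}$ are mutually independent. Set $\mathbf{C}_{\mathbf{y}}=E_s\mathbf{H}\mathbf{H}^H+E_J\mathbf{j}\mathbf{j}^H+N_0\mathbf{I}_B$. Consider the unconstrained optimization problem $$\min_{\beta\in\mathbb{C},\,\mathbf{b}\in\mathbb{C}^B,\,\mathbf{a}\in\mathbb{C}^B}\ \mathbb{E}_{\mathbf{s},w,\mathbf{n}}\big[\|\beta\mathbf{b}\mathbf{a}^H\mathbf{y}-\mathbf{j}w\|^2\big].$$ Then a solution is $$\hat{\mathbf{b}}_{\mathbb{C}}=\mathbf{j},\qquad \hat{\mathbf{a}}_{\mathbb{C}}=E_J\mathbf{C}_{\mathbf{y}}^{-1}\mathbf{j},\qquad \hat\beta_{\mathbb{C}}=1,$$ and the corresponding transform $\hat{\mathbf{P}}_{\mathbb{C}}=\mathbf{I}_B-\hat\beta_{\mathbb{C}}\hat{\mathbf{b}}_{\mathbb{C}}\hat{\mathbf{a}}_{\mathbb{C}}^H$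 equals $$\hat{\mathbf{P}}_{\mathbb{C}}=\mathbf{I}_B-E_J\mathbf{j}\mathbf{j}^H\mathbf{C}_{\mathbf{y}}^{-1}.$$
   Context: $\mathbf{C}_{\mathbf{y}}$ is the covariance matrix of $\mathbf{y}$ (positive definite when $N_0>0$). The problem is the optimal choice of an analog transform $\mathbf{P}=\mathbf{I}_B-\beta\mathbf{b}\mathbf{a}^H$ minimizing $\mathbb{E}\|\mathbf{P}\mathbf{y}-(\mathbf{H}\mathbf{s}+\mathbf{n})\|^2$, with no alphabet constraints on $\mathbf{a},\mathbf{b}$. $(\cdot)^H$ is the conjugate transpose and $\|\cdot\|$ the Euclidean norm. *)

theory Defs
  imports "HOL-Analysis.Analysis" "HOL-Probability.Probability"
begin

definition cadj :: "complex^'n^'m \<Rightarrow> complex^'m^'n" where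
  "cadj A = (\<chi> i j. cnj (A $ j $ i))"

definition couter :: "complex^'m \<Rightarrow> complex^'n \<Rightarrow> complex^'n^'m" where
  "couter b a = (\<chi> i j. b $ i * cnj (a $ j))"

definition cscale :: "complex \<Rightarrow> complex^'n^'m \<Rightarrow> complex^'n^'m" where
  "cscale c A = (\<chi> i j. c * A $ i $ j)"

definition cov_y :: "real \<Rightarrow> real \<Rightarrow> real \<Rightarrow> complex^'u^'b \<Rightarrow> complex^'b \<Rightarrow> complex^'b^'b" where
  "cov_y Es EJ N0 H j =
     cscale (complex_of_real Es) (H ** cadj H) + cscale (complex_of_real EJ) (couter j j)
     + cscale (complex_of_real N0) (mat 1)"

(* circularly-symmetric complex Gaussian with variance v:
   real and imaginary parts independent N(0, v/2); degenerate (= 0 a.s.) when v = 0 *)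
definition circ_gaussian :: "'a measure \<Rightarrow> ('a \<Rightarrow> complex) \<Rightarrow> real \<Rightarrow> bool" where
  "circ_gaussian M X v \<longleftrightarrow>
     X \<in> borel_measurable M \<and>
     (if v = 0 then (AE x in M. X x = 0)
      else distributed M lborel (\<lambda>x. Re (X x)) (\<lambda>t. ennreal (normal_density 0 (sqrt (v/2)) t))
         \<and> distributed M lborel (\<lambda>x. Im (X x)) (\<lambda>t. ennreal (normal_density 0 (sqrt (v/2)) t))
         \<and> prob_space.indep_var M borel (\<lambda>x. Re (X x)) borel (\<lambda>x. Im (X x)))"

(* all scalar random entries (s_1..s_U, w, n_1..n_B) collected in one family *)
definition all_entries ::
  "('a \<Rightarrow> complex^'u) \<Rightarrow> ('a \<Rightarrow> complex) \<Rightarrow> ('a \<Rightarrow> complex^'b) \<Rightarrow> ('u + unit) + 'b \<Rightarrow> 'a \<Rightarrow> complex" where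
  "all_entries s w n idx x =
     (case idx of Inl (Inl i) \<Rightarrow> s x $ i | Inl (Inr _) \<Rightarrow> w x | Inr k \<Rightarrow> n x $ k)"

definition objective ::
  "'a measure \<Rightarrow> complex^'u^'b \<Rightarrow> complex^'b \<Rightarrow> ('a \<Rightarrow> complex^'u) \<Rightarrow> ('a \<Rightarrow> complex)
   \<Rightarrow> ('a \<Rightarrow> complex^'b) \<Rightarrow> complex \<Rightarrow> complex^'b \<Rightarrow> complex^'b \<Rightarrow> real" where
  "objective M H j s w n \<beta> b a =
     integral\<^sup>L M (\<lambda>x. (norm (cscale \<beta> (couter b a) *v (H *v s x + w x *s j + n x) - w x *s j))\<^sup>2)"

end

theory Submission
  imports Defs
begin


lemma real_gauss:
  assumes P: "prob_space M" and s: "0 < \<sigma>"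
    and D: "distributed M lborel R (\<lambda>t. ennreal (normal_density 0 \<sigma> t))"
  shows "integrable M R \<and> integral\<^sup>L M R = 0 \<and> integrable M (\<lambda>x. (R x)\<^sup>2)
         \<and> integral\<^sup>L M (\<lambda>x. (R x)\<^sup>2) = \<sigma>\<^sup>2"
proof -
  interpret prob_space M by fact
  have i1: "integrable M R"
    by (rule distributed_integrable_var[OF D normal_density_nonneg integrable_normal_moment_nz_1[OF s]])
  have e1: "integral\<^sup>L M R = 0"
    using normal_distributed_expectation[OF s D] by simp
  have i2: "integrable M (\<lambda>x. (R x)\<^sup>2)"
    using distributed_integrable[OF D, of "\<lambda>x. x\<^sup>2"] integrable_normal_moment[where k=2 and \<mu>=0 and \<sigma>=\<sigma>] s
    by (simp add: power2_eq_square)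
  have e2: "integral\<^sup>L M (\<lambda>x. (R x)\<^sup>2) = \<sigma>\<^sup>2"
    using normal_distributed_variance[OF s D] e1 by simp
  show ?thesis using i1 e1 i2 e2 by blast
qed

lemma gauss_moments:
  assumes P: "prob_space M" and g: "circ_gaussian M X v" and v: "v \<ge> 0"
  shows "integrable M X \<and> integral\<^sup>L M X = 0 \<and> integrable M (\<lambda>x. (cmod (X x))\<^sup>2)
         \<and> integral\<^sup>L M (\<lambda>x. (cmod (X x))\<^sup>2) = v"
proof (cases "v = 0")
  case True
  have m: "X \<in> borel_measurable M" using g by (simp add: circ_gaussian_def)
  have ae: "AE x in M. X x = 0" using g True by (simp add: circ_gaussian_def)
  have a1: "integrable M X \<longleftrightarrow> integrable M (\<lambda>x. 0::complex)"
    by (rule integrable_cong_AE) (use m ae in auto)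
  have a2: "integral\<^sup>L M X = integral\<^sup>L M (\<lambda>x. 0::complex)"
    by (rule integral_cong_AE) (use m ae in auto)
  have a3: "integrable M (\<lambda>x. (cmod (X x))\<^sup>2) \<longleftrightarrow> integrable M (\<lambda>x. 0::real)"
    by (rule integrable_cong_AE) (use m ae in auto)
  have a4: "integral\<^sup>L M (\<lambda>x. (cmod (X x))\<^sup>2) = integral\<^sup>L M (\<lambda>x. 0::real)"
    by (rule integral_cong_AE) (use m ae in auto)
  show ?thesis using a1 a2 a3 a4 True by simp
next
  case False
  define \<sigma> where "\<sigma> = sqrt (v/2)"
  have s: "0 < \<sigma>" using False v by (simp add: \<sigma>_def)
  have s2: "\<sigma>\<^sup>2 = v/2" using v by (simp add: \<sigma>_def)
  have DR: "distributed M lborel (\<lambda>x. Re (X x)) (\<lambda>t. ennreal (normal_density 0 \<sigma> t))"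
    and DI: "distributed M lborel (\<lambda>x. Im (X x)) (\<lambda>t. ennreal (normal_density 0 \<sigma> t))"
    using g False by (simp_all add: circ_gaussian_def \<sigma>_def)
  note R = real_gauss[OF P s DR] and I = real_gauss[OF P s DI]
  have eq: "X = (\<lambda>x. complex_of_real (Re (X x)) + \<i> * complex_of_real (Im (X x)))"
    by (simp add: fun_eq_iff complex_eq_iff)
  have iX: "integrable M X"
    by (subst eq) (use R I in auto)
  have eX: "integral\<^sup>L M X = 0"
    by (subst eq) (use R I in auto)
  have eqn: "(\<lambda>x. (cmod (X x))\<^sup>2) = (\<lambda>x. (Re (X x))\<^sup>2 + (Im (X x))\<^sup>2)"
    by (simp add: fun_eq_iff cmod_power2)
  show ?thesis using iX eX R I s2 by (simp add: eqn)
qed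

lemma cnj_borel: "cnj \<in> borel_measurable borel"
  by (rule borel_measurable_continuous_onI) (simp add: linear_continuous_on bounded_linear_cnj)

lemma meas_cnj[measurable]: "f \<in> borel_measurable M \<Longrightarrow> (\<lambda>x. cnj (f x)) \<in> borel_measurable M"
  using measurable_comp[OF _ cnj_borel] by (simp add: comp_def)

lemma sq_int_imp_int:
  fixes f :: "'a \<Rightarrow> complex"
  assumes P: "prob_space M" and m: "f \<in> borel_measurable M"
    and i: "integrable M (\<lambda>x. (cmod (f x))\<^sup>2)"
  shows "integrable M f"
proof -
  interpret prob_space M by fact
  have "integrable M (\<lambda>x. 1 + (cmod (f x))\<^sup>2)" using i by simp
  moreover have "\<And>x. norm (f x) \<le> norm (1 + (cmod (f x))\<^sup>2)"
  proof -
    fix x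
    have "cmod (f x) \<le> 1 + (cmod (f x))\<^sup>2"
    proof (cases "cmod (f x) \<le> 1")
      case True then show ?thesis by (smt (verit) zero_le_power2)
    next
      case False
      then have "cmod (f x) * 1 \<le> cmod (f x) * cmod (f x)" by (intro mult_left_mono) auto
      then show ?thesis by (simp add: power2_eq_square)
    qed
    then show "norm (f x) \<le> norm (1 + (cmod (f x))\<^sup>2)" by simp
  qed
  ultimately show ?thesis using m by (metis (no_types, lifting) AE_I2 Bochner_Integration.integrable_bound)
qed

lemma prod_int:
  fixes f g :: "'a \<Rightarrow> complex"
  assumes mf: "f \<in> borel_measurable M" and mg: "g \<in> borel_measurable M"
    and i: "integrable M (\<lambda>x. (cmod (f x))\<^sup>2)" and j: "integrable M (\<lambda>x. (cmod (g x))\<^sup>2)"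
  shows "integrable M (\<lambda>x. f x * cnj (g x))"
proof -
  have "integrable M (\<lambda>x. (cmod (f x))\<^sup>2 + (cmod (g x))\<^sup>2)" using i j by simp
  moreover have "\<And>x. norm (f x * cnj (g x)) \<le> norm ((cmod (f x))\<^sup>2 + (cmod (g x))\<^sup>2)"
  proof -
    fix x
    have "cmod (f x) * cmod (g x) \<le> (cmod (f x))\<^sup>2 + (cmod (g x))\<^sup>2"
    proof -
      have "0 \<le> (cmod (f x) - cmod (g x))\<^sup>2" by simp
      then have h: "2 * (cmod (f x) * cmod (g x)) \<le> (cmod (f x))\<^sup>2 + (cmod (g x))\<^sup>2"
        by (simp add: power2_eq_square algebra_simps)
      moreover have "0 \<le> cmod (f x) * cmod (g x)" by simp
      ultimately show ?thesis by linarith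
    qed
    then show "norm (f x * cnj (g x)) \<le> norm ((cmod (f x))\<^sup>2 + (cmod (g x))\<^sup>2)"
      by (simp add: norm_mult)
  qed
  moreover have "(\<lambda>x. f x * cnj (g x)) \<in> borel_measurable M" using mf mg by measurable
  ultimately show ?thesis by (metis (no_types, lifting) AE_I2 Bochner_Integration.integrable_bound)
qed

definition dv :: "real \<Rightarrow> real \<Rightarrow> real \<Rightarrow> ('u + unit) + 'b \<Rightarrow> real" where
  "dv Es EJ N0 p = (case p of Inl (Inl _) \<Rightarrow> Es | Inl (Inr _) \<Rightarrow> EJ | Inr _ \<Rightarrow> N0)"

lemma ae_simps[simp]:
  "all_entries s w n (Inl (Inl i)) = (\<lambda>x. s x $ i)"
  "all_entries s w n (Inl (Inr u)) = w"
  "all_entries s w n (Inr k) = (\<lambda>x. n x $ k)"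
  by (auto simp: all_entries_def fun_eq_iff)

lemma entry_first:
  fixes s :: "'a \<Rightarrow> complex^'u" and n :: "'a \<Rightarrow> complex^'b"
  assumes P: "prob_space M" and EJ: "EJ \<ge> 0" and N0: "N0 > 0"
    and ind: "prob_space.indep_vars M (\<lambda>_. borel) (all_entries s w n) UNIV"
    and si: "\<And>i. integrable M (\<lambda>x. (cmod (s x $ i))\<^sup>2)"
    and sm: "\<And>i. integral\<^sup>L M (\<lambda>x. s x $ i) = 0"
    and wg: "circ_gaussian M w EJ"
    and ng: "\<And>k. circ_gaussian M (\<lambda>x. n x $ k) N0"
  shows "all_entries s w n p \<in> borel_measurable M \<and> integrable M (all_entries s w n p)
     \<and> integral\<^sup>L M (all_entries s w n p) = 0
     \<and> integrable M (\<lambda>x. (cmod (all_entries s w n p x))\<^sup>2)"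
proof -
  have m: "all_entries s w n p \<in> borel_measurable M"
    using ind P by (simp add: prob_space.indep_vars_def)
  show ?thesis
  proof (cases p)
    case (Inl q)
    then show ?thesis
    proof (cases q)
      case (Inl i)
      have mi: "(\<lambda>x. s x $ i) \<in> borel_measurable M" using m \<open>p = Inl q\<close> Inl by simp
      show ?thesis using \<open>p = Inl q\<close> Inl mi si[of i] sm[of i] sq_int_imp_int[OF P mi si[of i]] by simp
    next
      case (Inr u)
      show ?thesis using \<open>p = Inl q\<close> Inr m gauss_moments[OF P wg EJ] by simp
    qed
  next
    case (Inr k)
    show ?thesis using Inr m gauss_moments[OF P ng[of k]] N0 by simp
  qed
qed

lemma int_mult_cnj: "integral\<^sup>L M (\<lambda>x. f x * cnj (f x)) = complex_of_real (integral\<^sup>L M (\<lambda>x. (cmod (f x))\<^sup>2))"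
proof -
  have "(\<lambda>x. f x * cnj (f x)) = (\<lambda>x. complex_of_real ((cmod (f x))\<^sup>2))"
    by (simp add: complex_norm_square[symmetric] fun_eq_iff del: of_real_power)
  then show ?thesis by (simp del: of_real_power)
qed

lemma entry_cross:
  fixes s :: "'a \<Rightarrow> complex^'u" and n :: "'a \<Rightarrow> complex^'b"
  assumes P: "prob_space M" and EJ: "EJ \<ge> 0" and N0: "N0 > 0"
    and ind: "prob_space.indep_vars M (\<lambda>_. borel) (all_entries s w n) UNIV"
    and si: "\<And>i. integrable M (\<lambda>x. (cmod (s x $ i))\<^sup>2)"
    and sm: "\<And>i. integral\<^sup>L M (\<lambda>x. s x $ i) = 0"
    and sc: "\<And>i k. integral\<^sup>L M (\<lambda>x. s x $ i * cnj (s x $ k)) = (if i = k then complex_of_real Es else 0)"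
    and wg: "circ_gaussian M w EJ"
    and ng: "\<And>k. circ_gaussian M (\<lambda>x. n x $ k) N0"
  shows "integrable M (\<lambda>x. all_entries s w n p x * cnj (all_entries s w n q x))
     \<and> integral\<^sup>L M (\<lambda>x. all_entries s w n p x * cnj (all_entries s w n q x))
         = complex_of_real (if p = q then dv Es EJ N0 p else 0)"
proof -
  interpret prob_space M by fact
  let ?Z = "all_entries s w n"
  note F = entry_first[OF P EJ N0 ind si sm wg ng]
  have int: "integrable M (\<lambda>x. ?Z p x * cnj (?Z q x))"
    using F[of p] F[of q] by (intro prod_int) auto
  have val: "integral\<^sup>L M (\<lambda>x. ?Z p x * cnj (?Z q x)) = complex_of_real (if p = q then dv Es EJ N0 p else 0)"
  proof (cases "p = q")
    case True
    have eq: "(\<lambda>x. ?Z p x * cnj (?Z q x)) = (\<lambda>x. complex_of_real ((cmod (?Z p x))\<^sup>2))"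
      using True by (simp add: complex_norm_square[symmetric] fun_eq_iff del: of_real_power)
    show ?thesis
    proof (cases p)
      case (Inl r)
      then show ?thesis
      proof (cases r)
        case (Inl i)
        show ?thesis using sc[of i i] True[symmetric] \<open>p = Inl r\<close> Inl by (simp add: dv_def)
      next
        case (Inr u)
        show ?thesis using gauss_moments[OF P wg EJ] True[symmetric] \<open>p = Inl r\<close> Inr
          by (simp add: dv_def int_mult_cnj)
      qed
    next
      case (Inr k)
      show ?thesis using gauss_moments[OF P ng[of k]] N0 True[symmetric] Inr
        by (simp add: dv_def int_mult_cnj)
    qed
  next
    case False
    define X where "X i x = (if i = q then cnj (?Z i x) else ?Z i x)" for i x
    have "indep_vars (\<lambda>_. borel) (\<lambda>i x. (if i = q then cnj else id) (?Z i x)) UNIV"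
      by (rule indep_vars_compose2[OF ind]) (auto simp: cnj_borel)
    moreover have "(\<lambda>i x. (if i = q then cnj else id) (?Z i x)) = X"
      by (auto simp: X_def fun_eq_iff)
    ultimately have iX: "indep_vars (\<lambda>_. borel) X UNIV" by simp
    have iX2: "indep_vars (\<lambda>_. borel) X {p, q}"
      by (rule indep_vars_subset[OF iX]) auto
    have intX: "integrable M (X i)" if "i \<in> {p, q}" for i
      using F[of i] by (cases "i = q") (auto simp: X_def[abs_def])
    have "integral\<^sup>L M (\<lambda>x. \<Prod>i\<in>{p,q}. X i x) = (\<Prod>i\<in>{p,q}. integral\<^sup>L M (X i))"
      by (rule indep_vars_lebesgue_integral[OF _ iX2 intX]) auto
    moreover have "(\<lambda>x. \<Prod>i\<in>{p,q}. X i x) = (\<lambda>x. ?Z p x * cnj (?Z q x))"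
      using False by (simp add: X_def fun_eq_iff)
    moreover have "integral\<^sup>L M (X p) = 0"
      using F[of p] False by (simp add: X_def[abs_def])
    ultimately show ?thesis using False by simp
  qed
  show ?thesis using int val by blast
qed

lemma norm_vec_sq: "(norm (v :: complex^'m))\<^sup>2 = (\<Sum>i\<in>UNIV. (cmod (v$i))\<^sup>2)"
  by (simp add: norm_vec_def L2_set_def sum_nonneg)

lemma quad:
  fixes A :: "complex^'i^'m" and Z :: "'i \<Rightarrow> 'a \<Rightarrow> complex"
  assumes int: "\<And>p q. integrable M (\<lambda>x. Z p x * cnj (Z q x))"
   and mom: "\<And>p q. integral\<^sup>L M (\<lambda>x. Z p x * cnj (Z q x)) = complex_of_real (if p = q then d p else 0)"
  shows "integral\<^sup>L M (\<lambda>x. (norm (A *v (\<chi> p. Z p x)))\<^sup>2) = (\<Sum>i\<in>UNIV. \<Sum>p\<in>UNIV. (cmod (A$i$p))\<^sup>2 * d p)"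
proof -
  have pt: "complex_of_real ((norm (A *v (\<chi> p. Z p x)))\<^sup>2)
      = (\<Sum>i\<in>UNIV. \<Sum>p\<in>UNIV. \<Sum>q\<in>UNIV. (A$i$p * cnj (A$i$q)) * (Z p x * cnj (Z q x)))" for x
  proof -
    have "complex_of_real ((norm (A *v (\<chi> p. Z p x)))\<^sup>2)
        = (\<Sum>i\<in>UNIV. complex_of_real ((cmod ((A *v (\<chi> p. Z p x))$i))\<^sup>2))"
      by (simp only: norm_vec_sq of_real_sum)
    also have "\<dots> = (\<Sum>i\<in>UNIV. ((A *v (\<chi> p. Z p x))$i) * cnj ((A *v (\<chi> p. Z p x))$i))"
      by (simp only: complex_norm_square)
    also have "\<dots> = (\<Sum>i\<in>UNIV. (\<Sum>p\<in>UNIV. A$i$p * Z p x) * (\<Sum>q\<in>UNIV. cnj (A$i$q) * cnj (Z q x)))"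
      by (simp add: matrix_vector_mult_def cnj_sum)
    also have "\<dots> = (\<Sum>i\<in>UNIV. \<Sum>p\<in>UNIV. \<Sum>q\<in>UNIV. (A$i$p * cnj (A$i$q)) * (Z p x * cnj (Z q x)))"
      by (simp add: sum_product mult_ac)
    finally show ?thesis .
  qed
  have "complex_of_real (integral\<^sup>L M (\<lambda>x. (norm (A *v (\<chi> p. Z p x)))\<^sup>2))
      = integral\<^sup>L M (\<lambda>x. \<Sum>i\<in>UNIV. \<Sum>p\<in>UNIV. \<Sum>q\<in>UNIV. (A$i$p * cnj (A$i$q)) * (Z p x * cnj (Z q x)))"
    by (simp only: integral_complex_of_real[symmetric] pt)
  also have "\<dots> = (\<Sum>i\<in>UNIV. \<Sum>p\<in>UNIV. \<Sum>q\<in>UNIV. (A$i$p * cnj (A$i$q)) * integral\<^sup>L M (\<lambda>x. Z p x * cnj (Z q x)))"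
    using int by (simp add: integral_sum integrable_sum)
  also have "\<dots> = (\<Sum>i\<in>UNIV. \<Sum>p\<in>UNIV. \<Sum>q\<in>UNIV. (if p = q then (A$i$p * cnj (A$i$q)) * complex_of_real (d p) else 0))"
    by (simp add: mom if_distrib[where f=complex_of_real] if_distrib[where f="\<lambda>z. _ * z"] cong: if_cong)
  also have "\<dots> = (\<Sum>i\<in>UNIV. \<Sum>p\<in>UNIV. (A$i$p * cnj (A$i$p)) * complex_of_real (d p))"
    by (simp add: sum.delta)
  also have "\<dots> = complex_of_real (\<Sum>i\<in>UNIV. \<Sum>p\<in>UNIV. (cmod (A$i$p))\<^sup>2 * d p)"
    by (simp add: complex_norm_square[symmetric] del: of_real_power)
  finally show ?thesis by (simp only: of_real_eq_iff)
qed

lemma cmod_add_sq: "(cmod (a + b))\<^sup>2 = (cmod a)\<^sup>2 + (cmod b)\<^sup>2 + 2 * Re (a * cnj b)"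
  unfolding cmod_power2 by (simp add: power2_eq_square algebra_simps)

lemma opt_core:
  fixes A0 B :: "'b::finite \<Rightarrow> 'p::finite \<Rightarrow> complex" and D :: "'b \<Rightarrow> 'l::finite \<Rightarrow> complex"
    and G :: "'l \<Rightarrow> 'p \<Rightarrow> complex" and d :: "'p \<Rightarrow> real"
  assumes d: "\<And>p. d p \<ge> 0"
    and B: "\<And>i p. B i p = (\<Sum>l\<in>UNIV. D i l * G l p)"
    and nrm: "\<And>i l. (\<Sum>p\<in>UNIV. A0 i p * complex_of_real (d p) * cnj (G l p)) = 0"
  shows "(\<Sum>i\<in>UNIV. \<Sum>p\<in>UNIV. (cmod (A0 i p))\<^sup>2 * d p)
       \<le> (\<Sum>i\<in>UNIV. \<Sum>p\<in>UNIV. (cmod (A0 i p + B i p))\<^sup>2 * d p)"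
proof -
  have cross: "(\<Sum>i\<in>UNIV. \<Sum>p\<in>UNIV. complex_of_real (d p) * (A0 i p * cnj (B i p))) = 0"
  proof -
    have "(\<Sum>i\<in>UNIV. \<Sum>p\<in>UNIV. complex_of_real (d p) * (A0 i p * cnj (B i p)))
        = (\<Sum>i\<in>UNIV. \<Sum>p\<in>UNIV. \<Sum>l\<in>UNIV. cnj (D i l) * (A0 i p * complex_of_real (d p) * cnj (G l p)))"
      unfolding B cnj_sum sum_distrib_left by (intro sum.cong refl) (simp add: mult_ac)
    also have "\<dots> = (\<Sum>i\<in>UNIV. \<Sum>l\<in>UNIV. cnj (D i l) * (\<Sum>p\<in>UNIV. A0 i p * complex_of_real (d p) * cnj (G l p)))"
      unfolding sum_distrib_left by (intro sum.cong refl) (rule sum.swap)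
    also have "\<dots> = 0" by (simp add: nrm)
    finally show ?thesis .
  qed
  have "(\<Sum>i\<in>UNIV. \<Sum>p\<in>UNIV. (cmod (A0 i p + B i p))\<^sup>2 * d p)
      = (\<Sum>i\<in>UNIV. \<Sum>p\<in>UNIV. (cmod (A0 i p))\<^sup>2 * d p + (cmod (B i p))\<^sup>2 * d p + 2 * (d p * Re (A0 i p * cnj (B i p))))"
    unfolding cmod_add_sq by (intro sum.cong refl) (simp add: algebra_simps)
  also have "\<dots> = (\<Sum>i\<in>UNIV. \<Sum>p\<in>UNIV. (cmod (A0 i p))\<^sup>2 * d p) + (\<Sum>i\<in>UNIV. \<Sum>p\<in>UNIV. (cmod (B i p))\<^sup>2 * d p)
        + 2 * Re (\<Sum>i\<in>UNIV. \<Sum>p\<in>UNIV. complex_of_real (d p) * (A0 i p * cnj (B i p)))"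
    by (simp add: sum.distrib sum_distrib_left Re_sum)
  also have "\<dots> = (\<Sum>i\<in>UNIV. \<Sum>p\<in>UNIV. (cmod (A0 i p))\<^sup>2 * d p) + (\<Sum>i\<in>UNIV. \<Sum>p\<in>UNIV. (cmod (B i p))\<^sup>2 * d p)"
    by (simp add: cross)
  also have "\<dots> \<ge> (\<Sum>i\<in>UNIV. \<Sum>p\<in>UNIV. (cmod (A0 i p))\<^sup>2 * d p)"
    using d by (simp add: sum_nonneg)
  finally show ?thesis .
qed

lemma cadj_mult: "cadj (A ** B) = cadj (B :: complex^'n^'k) ** cadj (A :: complex^'k^'m)"
  by (simp add: cadj_def matrix_matrix_mult_def vec_eq_iff cnj_sum mult.commute)

lemma cadj_mat1: "cadj (mat 1 :: complex^'n^'n) = mat 1"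
  by (simp add: cadj_def mat_def vec_eq_iff)

lemma cadj_cadj: "cadj (cadj A) = (A :: complex^'n^'m)"
  by (simp add: cadj_def vec_eq_iff)

lemma inv_props:
  fixes C :: "complex^'n^'n"
  assumes "invertible C"
  shows "C ** matrix_inv C = mat 1 \<and> matrix_inv C ** C = mat 1"
  using assms unfolding invertible_def matrix_inv_def by (rule someI_ex)

lemma inv_herm:
  fixes C :: "complex^'n^'n"
  assumes inv: "invertible C" and h: "cadj C = C"
  shows "cadj (matrix_inv C) = matrix_inv C"
proof -
  note I = inv_props[OF inv]
  have l: "cadj (matrix_inv C) ** C = mat 1"
    using I h cadj_mult[of C "matrix_inv C"] cadj_mat1 by metis
  have "cadj (matrix_inv C) = cadj (matrix_inv C) ** (C ** matrix_inv C)"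
    using I by (simp add: matrix_mul_rid)
  also have "\<dots> = matrix_inv C" by (simp add: matrix_mul_assoc l matrix_mul_lid)
  finally show ?thesis .
qed



lemma part2:
  fixes C :: "complex^'n^'n" and j :: "complex^'n"
  assumes h: "cadj Ci = Ci"
  shows "mat 1 - cscale 1 (couter j (cscale (complex_of_real EJ) Ci *v j))
         = mat 1 - cscale (complex_of_real EJ) (couter j j ** Ci)"
proof -
  have c: "cnj (Ci $ k $ l) = Ci $ l $ k" for k l
  proof -
    have "cadj Ci $ l $ k = Ci $ l $ k" using h by simp
    then show ?thesis by (simp add: cadj_def)
  qed
  have "couter j (cscale (complex_of_real EJ) Ci *v j) = cscale (complex_of_real EJ) (couter j j ** Ci)"
  proof -
    have "j $ i * cnj (\<Sum>l\<in>UNIV. complex_of_real EJ * Ci $ k $ l * j $ l)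
        = complex_of_real EJ * (\<Sum>l\<in>UNIV. j $ i * cnj (j $ l) * Ci $ l $ k)" for i k
    proof -
      have "j $ i * cnj (\<Sum>l\<in>UNIV. complex_of_real EJ * Ci $ k $ l * j $ l)
          = (\<Sum>l\<in>UNIV. j $ i * (complex_of_real EJ * Ci $ l $ k * cnj (j $ l)))"
        by (simp only: cnj_sum complex_cnj_mult complex_cnj_complex_of_real c sum_distrib_left)
      also have "\<dots> = (\<Sum>l\<in>UNIV. complex_of_real EJ * (j $ i * cnj (j $ l) * Ci $ l $ k))"
        by (intro sum.cong refl) (simp only: mult_ac)
      finally show ?thesis by (simp only: sum_distrib_left)
    qed
    then show ?thesis
      by (simp add: couter_def cscale_def matrix_vector_mult_def matrix_matrix_mult_def vec_eq_iff)
  qed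
  moreover have "cscale 1 X = X" for X :: "complex^'n^'n" by (simp add: cscale_def vec_eq_iff)
  ultimately show ?thesis by (simp only:)
qed

definition Gm :: "complex^'u^'b \<Rightarrow> complex^'b \<Rightarrow> complex^(('u + unit) + 'b)^'b" where
  "Gm H j = (\<chi> i p. case p of Inl (Inl u) \<Rightarrow> H$i$u | Inl (Inr _) \<Rightarrow> j$i | Inr k \<Rightarrow> (if k = i then 1 else 0))"

definition Km :: "complex^'b \<Rightarrow> complex^(('u::finite + unit) + 'b)^'b" where
  "Km j = (\<chi> i p. case p of Inl (Inr _) \<Rightarrow> j$i | _ \<Rightarrow> 0)"

lemma sum_idx:
  fixes f :: "('u::finite + unit) + 'b::finite \<Rightarrow> 'c::comm_monoid_add"
  shows "(\<Sum>p\<in>UNIV. f p) = (\<Sum>u\<in>UNIV. f (Inl (Inl u))) + f (Inl (Inr ())) + (\<Sum>k\<in>UNIV. f (Inr k))"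
proof -
  have "(\<Sum>p\<in>UNIV. f p) = (\<Sum>p\<in>UNIV <+> UNIV. f p)" by simp
  also have "\<dots> = (\<Sum>q\<in>UNIV. f (Inl q)) + (\<Sum>k\<in>UNIV. f (Inr k))"
    by (subst sum.Plus) (auto simp: comp_def)
  also have "(\<Sum>q\<in>UNIV. f (Inl q)) = (\<Sum>q\<in>UNIV <+> UNIV. f (Inl q))" by simp
  also have "\<dots> = (\<Sum>u\<in>UNIV. f (Inl (Inl u))) + (\<Sum>v\<in>UNIV. f (Inl (Inr v)))"
    by (subst sum.Plus) (auto simp: comp_def)
  also have "(\<Sum>v\<in>(UNIV::unit set). f (Inl (Inr v))) = f (Inl (Inr ()))"
    by (simp add: UNIV_unit)
  finally show ?thesis .
qed

lemma sum_delta_mult: "(\<Sum>k\<in>(UNIV::'k::finite set). f k * (if k = i then 1 else 0)) = (f i :: 'c::comm_semiring_1)"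
proof -
  have "\<And>k. f k * (if k = i then 1 else 0) = (if k = i then f k else 0)" by simp
  then show ?thesis by (simp add: sum.delta)
qed

lemma y_eq:
  fixes H :: "complex^'u^'b" and j :: "complex^'b" and s :: "'a \<Rightarrow> complex^'u" and n :: "'a \<Rightarrow> complex^'b"
  shows "H *v s x + w x *s j + n x = Gm H j *v (\<chi> p. all_entries s w n p x)"
  by (simp add: vec_eq_iff matrix_vector_mult_def Gm_def sum_idx mult.commute sum_delta_mult)

lemma wj_eq:
  fixes j :: "complex^'b" and s :: "'a \<Rightarrow> complex^'u" and n :: "'a \<Rightarrow> complex^'b"
  shows "w x *s j = (Km j :: complex^(('u + unit) + 'b)^'b) *v (\<chi> p. all_entries s w n p x)"
  by (simp add: vec_eq_iff matrix_vector_mult_def Km_def sum_idx mult.commute)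

lemma obj_eq:
  fixes H :: "complex^'u^'b" and j :: "complex^'b" and s :: "'a \<Rightarrow> complex^'u" and n :: "'a \<Rightarrow> complex^'b"
  shows "objective M H j s w n \<beta> b a
    = integral\<^sup>L M (\<lambda>x. (norm ((cscale \<beta> (couter b a) ** Gm H j - Km j) *v (\<chi> p. all_entries s w n p x)))\<^sup>2)"
  unfolding objective_def y_eq unfolding wj_eq[where s=s and n=n]
  by (simp add: matrix_vector_mul_assoc matrix_vector_mult_diff_rdistrib)

lemma delta2: "(\<Sum>k\<in>(UNIV::'k::finite set). (c::complex) * ((if k = i then 1 else 0) * cnj (if k = l then 1 else 0)))
   = (if i = l then c else 0)"
proof -
  have "\<And>k. c * ((if k = i then 1 else 0) * cnj (if k = l then 1 else 0))
     = (if k = i then (if i = l then c else 0) else 0)" by auto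
  then show ?thesis by (simp add: sum.delta)
qed

lemma cov_eq:
  fixes H :: "complex^'u^'b"
  shows "(\<Sum>p\<in>UNIV. Gm H j $i$p * complex_of_real (dv Es EJ N0 p) * cnj (Gm H j $l$p)) = cov_y Es EJ N0 H j $ i $ l"
  by (simp add: sum_idx Gm_def dv_def cov_y_def cscale_def couter_def cadj_def matrix_matrix_mult_def mat_def
      sum_distrib_left mult_ac delta2)

lemma K_eq:
  fixes H :: "complex^'u^'b"
  shows "(\<Sum>p\<in>UNIV. (Km j :: complex^(('u + unit) + 'b)^'b) $i$p * complex_of_real (dv Es EJ N0 p) * cnj (Gm H j $l$p))
     = complex_of_real EJ * j$i * cnj (j$l)"
  by (simp add: sum_idx Gm_def Km_def dv_def)

lemma cov_herm:
  fixes H :: "complex^'u^'b"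
  shows "cadj (cov_y Es EJ N0 H j) = cov_y Es EJ N0 H j"
proof -
  have "cnj (cov_y Es EJ N0 H j $ l $ i) = cov_y Es EJ N0 H j $ i $ l" for i l
    by (simp add: cov_eq[symmetric] cnj_sum mult_ac)
  then show ?thesis by (simp add: cadj_def vec_eq_iff)
qed

lemma cov_inj:
  fixes H :: "complex^'u^'b" and x :: "complex^'b"
  assumes Es: "Es \<ge> 0" and EJ: "EJ \<ge> 0" and N0: "N0 > 0"
    and z: "cov_y Es EJ N0 H j *v x = 0"
  shows "x = 0"
proof -
  let ?G = "Gm H j" and ?d = "dv Es EJ N0 :: ('u + unit) + 'b \<Rightarrow> real"
  define v where "v p = (\<Sum>l\<in>UNIV. x$l * cnj (?G$l$p))" for p
  define F where "F i l p = cnj (x$i) * ?G$i$p * complex_of_real (?d p) * cnj (?G$l$p) * x$l" for i l p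
  have d0: "?d p \<ge> 0" for p using Es EJ N0 by (simp add: dv_def split: sum.split)
  have 1: "(\<Sum>i\<in>UNIV. cnj (x$i) * (cov_y Es EJ N0 H j *v x)$i) = 0" using z by simp
  have 2: "(\<Sum>i\<in>UNIV. cnj (x$i) * (cov_y Es EJ N0 H j *v x)$i) = (\<Sum>i\<in>UNIV. \<Sum>l\<in>UNIV. \<Sum>p\<in>UNIV. F i l p)"
    by (simp add: matrix_vector_mult_def cov_eq[symmetric] sum_distrib_left sum_distrib_right F_def mult_ac)
  have 3: "(\<Sum>i\<in>UNIV. \<Sum>l\<in>UNIV. \<Sum>p\<in>UNIV. F i l p) = (\<Sum>p\<in>UNIV. \<Sum>i\<in>UNIV. \<Sum>l\<in>UNIV. F i l p)"
  proof -
    have "(\<Sum>i\<in>UNIV. \<Sum>l\<in>UNIV. \<Sum>p\<in>UNIV. F i l p) = (\<Sum>i\<in>UNIV. \<Sum>p\<in>UNIV. \<Sum>l\<in>UNIV. F i l p)"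
      by (intro sum.cong refl) (rule sum.swap)
    also have "\<dots> = (\<Sum>p\<in>UNIV. \<Sum>i\<in>UNIV. \<Sum>l\<in>UNIV. F i l p)"
      by (rule sum.swap)
    finally show ?thesis .
  qed
  have 4: "(\<Sum>p\<in>UNIV. \<Sum>i\<in>UNIV. \<Sum>l\<in>UNIV. F i l p) = (\<Sum>p\<in>UNIV. complex_of_real (?d p) * (v p * cnj (v p)))"
    by (simp add: v_def F_def cnj_sum sum_product sum_distrib_left mult_ac)
  also have "\<dots> = complex_of_real (\<Sum>p\<in>UNIV. ?d p * (cmod (v p))\<^sup>2)"
    by (simp add: complex_norm_square[symmetric] del: of_real_power)
  finally have e: "(\<Sum>p\<in>UNIV. \<Sum>i\<in>UNIV. \<Sum>l\<in>UNIV. F i l p) = complex_of_real (\<Sum>p\<in>UNIV. ?d p * (cmod (v p))\<^sup>2)" .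
  have "complex_of_real (\<Sum>p\<in>UNIV. ?d p * (cmod (v p))\<^sup>2) = 0"
    using e 1 2 3 by metis
  then have "(\<Sum>p\<in>UNIV. ?d p * (cmod (v p))\<^sup>2) = 0" by (simp only: of_real_eq_0_iff)
  then have "\<forall>p\<in>UNIV. ?d p * (cmod (v p))\<^sup>2 = 0"
    by (subst (asm) sum_nonneg_eq_0_iff) (auto intro: mult_nonneg_nonneg d0)
  then have "N0 * (cmod (v (Inr k)))\<^sup>2 = 0" for k
    by (metis UNIV_I dv_def sum.simps(6))
  moreover have "v (Inr k) = x$k" for k
  proof -
    have "v (Inr k) = (\<Sum>l\<in>UNIV. x$l * (if k = l then 1 else 0))"
      unfolding v_def Gm_def by (intro sum.cong refl) simp
    also have "\<dots> = x$k" by (simp add: sum.delta' if_distrib[where f="\<lambda>z. _ * z"] cong: if_cong)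
    finally show ?thesis .
  qed
  ultimately show ?thesis using N0 by (simp add: vec_eq_iff)
qed

lemma normal_eq:
  fixes H :: "complex^'u^'b" and F0 :: "complex^'b^'b"
  assumes F0: "F0 ** cov_y Es EJ N0 H j = cscale (complex_of_real EJ) (couter j j)"
  shows "(\<Sum>p\<in>UNIV. (F0 ** Gm H j - Km j)$i$p * complex_of_real (dv Es EJ N0 p) * cnj (Gm H j $l$p)) = 0"
proof -
  let ?G = "Gm H j" and ?K = "Km j :: complex^(('u + unit) + 'b)^'b" and ?d = "\<lambda>p. complex_of_real (dv Es EJ N0 p)"
  have "(\<Sum>p\<in>UNIV. (F0 ** ?G - ?K)$i$p * ?d p * cnj (?G $l$p))
      = (\<Sum>p\<in>UNIV. (\<Sum>m\<in>UNIV. F0$i$m * ?G$m$p) * ?d p * cnj (?G $l$p)) - (\<Sum>p\<in>UNIV. ?K$i$p * ?d p * cnj (?G $l$p))"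
    by (simp add: matrix_matrix_mult_def algebra_simps sum_subtractf)
  also have "(\<Sum>p\<in>UNIV. (\<Sum>m\<in>UNIV. F0$i$m * ?G$m$p) * ?d p * cnj (?G $l$p))
      = (\<Sum>m\<in>UNIV. F0$i$m * (\<Sum>p\<in>UNIV. ?G$m$p * ?d p * cnj (?G $l$p)))"
  proof -
    have "(\<Sum>p\<in>UNIV. (\<Sum>m\<in>UNIV. F0$i$m * ?G$m$p) * ?d p * cnj (?G $l$p))
        = (\<Sum>p\<in>UNIV. \<Sum>m\<in>UNIV. F0$i$m * (?G$m$p * ?d p * cnj (?G $l$p)))"
      unfolding sum_distrib_right by (intro sum.cong refl) (simp add: mult_ac)
    also have "\<dots> = (\<Sum>m\<in>UNIV. \<Sum>p\<in>UNIV. F0$i$m * (?G$m$p * ?d p * cnj (?G $l$p)))"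
      by (rule sum.swap)
    finally show ?thesis by (simp add: sum_distrib_left)
  qed
  also have "\<dots> = (F0 ** cov_y Es EJ N0 H j)$i$l"
    by (simp add: cov_eq matrix_matrix_mult_def)
  also have "(\<Sum>p\<in>UNIV. ?K$i$p * ?d p * cnj (?G $l$p)) = complex_of_real EJ * j$i * cnj (j$l)"
    by (rule K_eq)
  finally show ?thesis using F0 by (simp add: cscale_def couter_def mult_ac)
qed

lemma cscale_mult: "cscale c A ** B = cscale c (A ** B :: complex^'n^'m)"
  by (simp add: cscale_def matrix_matrix_mult_def vec_eq_iff sum_distrib_left mult_ac)

theorem corollary1:
  fixes M :: "'a measure"
    and H :: "complex^'u^'b" and j :: "complex^'b"
    and s :: "'a \<Rightarrow> complex^'u" and w :: "'a \<Rightarrow> complex" and n :: "'a \<Rightarrow> complex^'b"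
    and Es EJ N0 :: real
  assumes "prob_space M"
    and "Es \<ge> 0" and "EJ \<ge> 0" and "N0 > 0"
    and "s \<in> borel_measurable M" and "w \<in> borel_measurable M" and "n \<in> borel_measurable M"
    and "prob_space.indep_vars M (\<lambda>_. borel) (all_entries s w n) UNIV"
    and "\<And>i. integrable M (\<lambda>x. (cmod (s x $ i))\<^sup>2)"
    and "\<And>i. integral\<^sup>L M (\<lambda>x. s x $ i) = 0"
    and "\<And>i k. integral\<^sup>L M (\<lambda>x. s x $ i * cnj (s x $ k)) = (if i = k then complex_of_real Es else 0)"
    and "circ_gaussian M w EJ"
    and "\<And>k. circ_gaussian M (\<lambda>x. n x $ k) N0"
  shows "(\<forall>\<beta> b a. objective M H j s w n 1 j (cscale (complex_of_real EJ) (matrix_inv (cov_y Es EJ N0 H j)) *v j)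
                 \<le> objective M H j s w n \<beta> b a)
       \<and> mat 1 - cscale 1 (couter j (cscale (complex_of_real EJ) (matrix_inv (cov_y Es EJ N0 H j)) *v j))
         = mat 1 - cscale (complex_of_real EJ) (couter j j ** matrix_inv (cov_y Es EJ N0 H j))"
proof -
  interpret prob_space M by fact
  let ?C = "cov_y Es EJ N0 H j"
  let ?Ci = "matrix_inv ?C"
  let ?G = "Gm H j" and ?K = "Km j :: complex^(('u + unit) + 'b)^'b"
  let ?d = "dv Es EJ N0 :: ('u + unit) + 'b \<Rightarrow> real"
  let ?Z = "all_entries s w n"
  have "\<exists>B. B ** ?C = mat 1"
    using cov_inj[OF assms(2,3,4)] by (subst matrix_left_invertible_ker) blast
  then have inv: "invertible ?C" by (simp add: invertible_left_inverse)
  note I = inv_props[OF inv]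
  have herm: "cadj ?Ci = ?Ci" by (rule inv_herm[OF inv cov_herm])
  note P2 = part2[OF herm, of j EJ]
  define F0 where "F0 = cscale 1 (couter j (cscale (complex_of_real EJ) ?Ci *v j))"
  have F0': "F0 = cscale (complex_of_real EJ) (couter j j ** ?Ci)"
    using P2 unfolding F0_def by simp
  have F0C: "F0 ** ?C = cscale (complex_of_real EJ) (couter j j)"
    unfolding F0' cscale_mult by (simp add: matrix_mul_assoc[symmetric] I matrix_mul_rid)
  have nrm: "(\<Sum>p\<in>UNIV. (F0 ** ?G - ?K)$i$p * complex_of_real (?d p) * cnj (?G $l$p)) = 0" for i l
    by (rule normal_eq[OF F0C])
  note EC = entry_cross[OF assms(1) assms(3) assms(4) assms(8) assms(9) assms(10) assms(11) assms(12) assms(13)]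
  have obj: "objective M H j s w n \<beta> b a
      = (\<Sum>i\<in>UNIV. \<Sum>p\<in>UNIV. (cmod ((cscale \<beta> (couter b a) ** ?G - ?K)$i$p))\<^sup>2 * ?d p)" for \<beta> b a
    unfolding obj_eq by (rule quad) (use EC in auto)
  have "objective M H j s w n 1 j (cscale (complex_of_real EJ) ?Ci *v j) \<le> objective M H j s w n \<beta> b a" for \<beta> b a
  proof -
    define F where "F = cscale \<beta> (couter b a)"
    have le: "(\<Sum>i\<in>UNIV. \<Sum>p\<in>UNIV. (cmod ((F0 ** ?G - ?K)$i$p))\<^sup>2 * ?d p)
       \<le> (\<Sum>i\<in>UNIV. \<Sum>p\<in>UNIV. (cmod ((F0 ** ?G - ?K)$i$p + ((F - F0) ** ?G)$i$p))\<^sup>2 * ?d p)"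
    proof (rule opt_core[where D="\<lambda>i l. (F - F0)$i$l" and G="\<lambda>l p. ?G$l$p"])
      show "\<And>p. 0 \<le> ?d p" using assms(2,3,4) by (simp add: dv_def split: sum.split)
      show "\<And>i p. ((F - F0) ** ?G)$i$p = (\<Sum>l\<in>UNIV. (F - F0)$i$l * ?G$l$p)"
        by (simp add: matrix_matrix_mult_def)
      show "\<And>i l. (\<Sum>p\<in>UNIV. (F0 ** ?G - ?K)$i$p * complex_of_real (?d p) * cnj (?G$l$p)) = 0"
        by (rule nrm)
    qed
    have eqA: "(F0 ** ?G - ?K)$i$p + ((F - F0) ** ?G)$i$p = (F ** ?G - ?K)$i$p" for i p
      by (simp add: matrix_matrix_mult_def sum_subtractf algebra_simps)
    from le have "(\<Sum>i\<in>UNIV. \<Sum>p\<in>UNIV. (cmod ((F0 ** ?G - ?K)$i$p))\<^sup>2 * ?d p)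
       \<le> (\<Sum>i\<in>UNIV. \<Sum>p\<in>UNIV. (cmod ((F ** ?G - ?K)$i$p))\<^sup>2 * ?d p)"
      by (simp only: eqA)
    then show ?thesis unfolding obj F_def F0_def .
  qed
  then show ?thesis using P2 by blast
qed

end
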